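(* Let $x \in \mathbb{R}^n$ be deterministic, $y\in\mathbb{R}^n$ deterministic, and $f:\mathbb{R}^n\to\mathbb{R}^n$. Let $\tilde a,\tilde b,\tilde c$ be random vectors in $\mathbb{R}^n$ such that all $3n$ entries are mutually independent, $\mathbb{E}[\tilde a_i] = \mathbb{E}[\tilde b_i] = \mathbb{E}[\tilde c_i] = x_i$ for all $i$, and for each $i$ the variables $\tilde a_i,\tilde b_i,\tilde c_i$ have common finite central moments up to order six; denote by $\sigma_i^2$ their common variance and by $\mu_i^{[4]}$ their common fourth central moment. Let $\widetilde{\mathrm{uSE}}_i := (\tilde a_i - f(y)_i)^2 - \frac{(\tilde b_i - \tilde c_i)^2}{2}$. Then for every $1\le i\le n$, $$\mathrm{Var}[\widetilde{\mathrm{uSE}}_i] \ge \frac{\mu_i^{[4]} + \sigma_i^4}{2}.$$ *)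

theory Defs
  imports "HOL-Probability.Probability"
begin

definition entries3 :: "('a \<Rightarrow> real ^ 'n) \<Rightarrow> ('a \<Rightarrow> real ^ 'n) \<Rightarrow> ('a \<Rightarrow> real ^ 'n)
    \<Rightarrow> nat \<times> 'n \<Rightarrow> 'a \<Rightarrow> real" where
  "entries3 A B C = (\<lambda>(k, i) \<omega>. if k = 0 then A \<omega> $ i else if k = 1 then B \<omega> $ i else C \<omega> $ i)"

end

theory Submission
  imports Defs
begin

theorem lemmaE4:
  fixes M :: "'a measure"
    and x y :: "real ^ 'n"
    and f :: "real ^ 'n \<Rightarrow> real ^ 'n"
    and A B C :: "'a \<Rightarrow> real ^ 'n"
    and i :: 'n
  assumes "prob_space M"
    and indep: "prob_space.indep_vars M (\<lambda>_. borel) (entries3 A B C) ({0, 1, 2} \<times> UNIV)"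
    and meanA: "\<forall>j. prob_space.expectation M (\<lambda>\<omega>. A \<omega> $ j) = x $ j"
    and meanB: "\<forall>j. prob_space.expectation M (\<lambda>\<omega>. B \<omega> $ j) = x $ j"
    and meanC: "\<forall>j. prob_space.expectation M (\<lambda>\<omega>. C \<omega> $ j) = x $ j"
    and finA: "\<forall>j. \<forall>k\<in>{1..6::nat}. integrable M (\<lambda>\<omega>. (A \<omega> $ j - x $ j) ^ k)"
    and finB: "\<forall>j. \<forall>k\<in>{1..6::nat}. integrable M (\<lambda>\<omega>. (B \<omega> $ j - x $ j) ^ k)"
    and finC: "\<forall>j. \<forall>k\<in>{1..6::nat}. integrable M (\<lambda>\<omega>. (C \<omega> $ j - x $ j) ^ k)"
    and momAB: "\<forall>j. \<forall>k\<in>{1..6::nat}.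
       prob_space.expectation M (\<lambda>\<omega>. (A \<omega> $ j - x $ j) ^ k)
     = prob_space.expectation M (\<lambda>\<omega>. (B \<omega> $ j - x $ j) ^ k)"
    and momAC: "\<forall>j. \<forall>k\<in>{1..6::nat}.
       prob_space.expectation M (\<lambda>\<omega>. (A \<omega> $ j - x $ j) ^ k)
     = prob_space.expectation M (\<lambda>\<omega>. (C \<omega> $ j - x $ j) ^ k)"
  shows "prob_space.variance M (\<lambda>\<omega>. (A \<omega> $ i - f y $ i)\<^sup>2 - (B \<omega> $ i - C \<omega> $ i)\<^sup>2 / 2)
     \<ge> (prob_space.expectation M (\<lambda>\<omega>. (A \<omega> $ i - x $ i) ^ 4)
         + (prob_space.variance M (\<lambda>\<omega>. A \<omega> $ i))\<^sup>2) / 2"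
proof -
  interpret P: prob_space M by fact
  define s where "s = (\<lambda>\<omega>. A \<omega> $ i - x $ i)"
  define t where "t = (\<lambda>\<omega>. B \<omega> $ i - x $ i)"
  define u where "u = (\<lambda>\<omega>. C \<omega> $ i - x $ i)"
  define m where "m = (\<lambda>k::nat. P.expectation (\<lambda>\<omega>. s \<omega> ^ k))"
  define d where "d = x $ i - f y $ i"
  have intS: "integrable M (\<lambda>\<omega>. s \<omega> ^ k)" if "k \<le> 6" for k
    using finA that by (cases "k = 0") (auto simp: s_def)
  have intT: "integrable M (\<lambda>\<omega>. t \<omega> ^ k)" if "k \<le> 6" for k
    using finB that by (cases "k = 0") (auto simp: t_def)
  have intU: "integrable M (\<lambda>\<omega>. u \<omega> ^ k)" if "k \<le> 6" for k
    using finC that by (cases "k = 0") (auto simp: u_def)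
  have mT: "P.expectation (\<lambda>\<omega>. t \<omega> ^ k) = m k" if "k \<le> 6" for k
    using momAB that by (cases "k = 0") (auto simp: t_def s_def m_def P.prob_space)
  have mU: "P.expectation (\<lambda>\<omega>. u \<omega> ^ k) = m k" if "k \<le> 6" for k
    using momAC that by (cases "k = 0") (auto simp: u_def s_def m_def P.prob_space)
  have m0: "m 0 = 1" by (simp add: m_def P.prob_space)
  have m1: "m 1 = 0"
  proof -
    have "integrable M (\<lambda>\<omega>. A \<omega> $ i - x $ i)" using finA[THEN spec[where x=i], THEN bspec[where x=1]] by simp
    then have iA: "integrable M (\<lambda>\<omega>. A \<omega> $ i)"
      using Bochner_Integration.integrable_add[of M "\<lambda>\<omega>. A \<omega> $ i - x $ i" "\<lambda>_. x $ i"] by simp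
    show ?thesis unfolding m_def s_def using meanA iA
      by (simp add: Bochner_Integration.integral_diff P.prob_space)
  qed
  have m1': "m (Suc 0) = 0" using m1 by simp
  define mon where "mon = (\<lambda>p q r \<omega>. s \<omega> ^ p * t \<omega> ^ q * u \<omega> ^ r)"
  have monI: "integrable M (mon p q r) \<and> P.expectation (mon p q r) = m p * m q * m r"
    if "p \<le> 6" "q \<le> 6" "r \<le> 6" for p q r
  proof -
    define e where "e = (\<lambda>(k::nat, j::'n). if k = 0 then p else if k = 1 then q else r)"
    define I where "I = {(0::nat, i), (1, i), (2, i)}"
    have ind: "P.indep_vars (\<lambda>_. borel) (entries3 A B C) I"
      using P.indep_vars_subset[OF indep] by (auto simp: I_def)
    have ind2: "P.indep_vars (\<lambda>_. borel) (\<lambda>kj \<omega>. (\<lambda>v. (v - x $ snd kj) ^ e kj) (entries3 A B C kj \<omega>)) I"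
      by (rule P.indep_vars_compose2[OF ind]) auto
    have ints: "integrable M (\<lambda>\<omega>. (entries3 A B C kj \<omega> - x $ snd kj) ^ e kj)" if "kj \<in> I" for kj
      using that intS[OF \<open>p \<le> 6\<close>] intT[OF \<open>q \<le> 6\<close>] intU[OF \<open>r \<le> 6\<close>]
      by (auto simp: I_def e_def entries3_def s_def t_def u_def)
    have fin: "finite I" by (simp add: I_def)
    have eqf: "(\<lambda>\<omega>. \<Prod>kj\<in>I. (entries3 A B C kj \<omega> - x $ snd kj) ^ e kj) = mon p q r"
      by (auto simp: I_def e_def entries3_def mon_def s_def t_def u_def fun_eq_iff)
    have "integrable M (\<lambda>\<omega>. \<Prod>kj\<in>I. (entries3 A B C kj \<omega> - x $ snd kj) ^ e kj)"
      by (rule P.indep_vars_integrable[OF fin ind2 ints]) 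
    moreover have "P.expectation (\<lambda>\<omega>. \<Prod>kj\<in>I. (entries3 A B C kj \<omega> - x $ snd kj) ^ e kj)
        = (\<Prod>kj\<in>I. P.expectation (\<lambda>\<omega>. (entries3 A B C kj \<omega> - x $ snd kj) ^ e kj))"
      by (rule P.indep_vars_lebesgue_integral[OF fin ind2 ints])
    moreover have "(\<Prod>kj\<in>I. P.expectation (\<lambda>\<omega>. (entries3 A B C kj \<omega> - x $ snd kj) ^ e kj))
        = m p * m q * m r"
      using mT[OF \<open>q \<le> 6\<close>] mU[OF \<open>r \<le> 6\<close>]
      by (simp add: I_def e_def entries3_def m_def s_def t_def u_def)
    ultimately show ?thesis using eqf by simp
  qed
  have monInt: "integrable M (mon p q r)" if "p \<le> 6" "q \<le> 6" "r \<le> 6" for p q r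
    using monI[OF that] by blast
  have monE: "P.expectation (mon p q r) = m p * m q * m r" if "p \<le> 6" "q \<le> 6" "r \<le> 6" for p q r
    using monI[OF that] by blast
  have monInt': "integrable M (\<lambda>\<omega>. c * mon p q r \<omega>)" if "p \<le> 6" "q \<le> 6" "r \<le> 6" for p q r c
    using monInt[OF that] by simp
  note simps = monInt monInt' monE Bochner_Integration.integral_add Bochner_Integration.integral_diff
    Bochner_Integration.integral_mult_right m0 m1 m1'
  define U where "U = (\<lambda>\<omega>. (A \<omega> $ i - f y $ i)\<^sup>2 - (B \<omega> $ i - C \<omega> $ i)\<^sup>2 / 2)"
  have Ueq: "U = (\<lambda>\<omega>. mon 2 0 0 \<omega> + 2 * d * mon 1 0 0 \<omega> + d^2 * mon 0 0 0 \<omega>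
      - (1/2) * mon 0 2 0 \<omega> + mon 0 1 1 \<omega> - (1/2) * mon 0 0 2 \<omega>)"
    by (auto simp: fun_eq_iff U_def mon_def s_def t_def u_def d_def power2_eq_square field_simps)
  have EU: "P.expectation U = d^2"
    unfolding Ueq by (simp add: simps mT mU)
  have V2: "(\<lambda>\<omega>. (U \<omega> - d^2)\<^sup>2) = (\<lambda>\<omega>. mon 4 0 0 \<omega> + 4 * d * mon 3 0 0 \<omega> + 4 * d^2 * mon 2 0 0 \<omega>
      - mon 2 2 0 \<omega> + 2 * mon 2 1 1 \<omega> - mon 2 0 2 \<omega>
      - 2 * d * mon 1 2 0 \<omega> + 4 * d * mon 1 1 1 \<omega> - 2 * d * mon 1 0 2 \<omega>
      + (1/4) * mon 0 4 0 \<omega> - mon 0 3 1 \<omega> + (3/2) * mon 0 2 2 \<omega> - mon 0 1 3 \<omega> + (1/4) * mon 0 0 4 \<omega>)"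
    unfolding Ueq by (auto simp: fun_eq_iff mon_def power2_eq_square algebra_simps power_numeral_reduce)
  have EV2: "P.expectation (\<lambda>\<omega>. (U \<omega> - d^2)\<^sup>2) = 3/2 * m 4 + 4 * d * m 3 + 4 * d^2 * m 2 - (m 2)^2 / 2"
    unfolding V2 by (simp add: simps mT mU power2_eq_square algebra_simps)
  have W2: "(\<lambda>\<omega>. (s \<omega>^2 + 2 * d * s \<omega> - m 2)\<^sup>2) = (\<lambda>\<omega>. mon 4 0 0 \<omega> + 4 * d * mon 3 0 0 \<omega>
      + (4 * d^2 - 2 * m 2) * mon 2 0 0 \<omega> - 4 * d * m 2 * mon 1 0 0 \<omega> + (m 2)^2 * mon 0 0 0 \<omega>)"
    by (auto simp: fun_eq_iff mon_def power2_eq_square algebra_simps power_numeral_reduce)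
  have "0 \<le> P.expectation (\<lambda>\<omega>. (s \<omega>^2 + 2 * d * s \<omega> - m 2)\<^sup>2)"
    by (rule Bochner_Integration.integral_nonneg) simp
  also have "\<dots> = m 4 + 4 * d * m 3 + 4 * d^2 * m 2 - (m 2)^2"
    unfolding W2 by (simp add: simps power2_eq_square algebra_simps)
  finally have nn: "0 \<le> m 4 + 4 * d * m 3 + 4 * d^2 * m 2 - (m 2)^2" .
  have iA: "integrable M (\<lambda>\<omega>. A \<omega> $ i)"
    using finA[THEN spec[where x=i], THEN bspec[where x=1]] Bochner_Integration.integrable_add[of M "\<lambda>\<omega>. A \<omega> $ i - x $ i" "\<lambda>_. x $ i"] by simp
  have varA: "P.variance (\<lambda>\<omega>. A \<omega> $ i) = m 2"
    using meanA by (simp add: m_def s_def)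
  have "P.variance U = 3/2 * m 4 + 4 * d * m 3 + 4 * d^2 * m 2 - (m 2)^2 / 2"
    using EU EV2 by simp
  then have fin: "(m 4 + (m 2)\<^sup>2) / 2 \<le> P.variance U" using nn by simp
  have e4: "P.expectation (\<lambda>\<omega>. (A \<omega> $ i - x $ i) ^ 4) = m 4" by (simp add: m_def s_def)
  show ?thesis unfolding e4 varA using fin by (simp add: U_def)
qed

end
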